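(* Under the standing setup, with $x^*(g,h)$ the limit of the opinion dynamics, the quantity $f(g,h)\triangleq c^\top x^*(g,h)$ satisfies $$f(g,h)=\frac{(1-2\beta+(h-g)\gamma)\widehat s-\chi+(h+g)\beta+(g^2-h^2)\gamma}{1-\lambda+(g-h)\gamma}\;c^\top\mathbf 1.$$
   Context: Standing setup. Fix $n\in\mathbb N$ and $W=[w_{ij}]\in\mathbb R^{n\times n}$ with $w_{ij}\ge 0$ and $w_{ii}=0$. Let $\|W\|_\infty=\max_i\sum_j|w_{ij}|$, $\|W\|_1=\max_j\sum_i|w_{ij}|$, and let $\lambda$ be the spectral radius of $W$; assume there is a vector $c\in\mathbb R^n$ with all entries positive and $W^\top c=\lambda c$. Fix $\beta,\gamma$ with $\beta\ge\gamma\ge0$ and $1-\max\{\|W\|_\infty,\|W\|_1\}>\max\{2\beta,4\gamma\}$. Fix $s\in[0,1]^n$, $\overline s=\max_i s_i$, $\underline s=\min_i s_i$, and $g,h$ with $0\le g\le\underline s\le\overline s\le h\le1$. Set $\widehat c_i=c_i/\sum_j c_j$, $\widehat s=\sum_i\widehat c_i s_i$, $\chi=\sum_i\widehat c_i s_i\sum_j w_{ij}$. For $x\in\mathbb R$ set $\overline w(x)=\beta-\gamma|x-h|$, $\underline w(x)=\beta-\gamma|x-g|$, $\alpha_i(x)=1-\sum_j w_{ij}-\overline w(x)-\underline w(x)$; the opinion dynamics are $x_i(k+1)=\alpha_i(x_i(k))s_i+\sum_j w_{ij}x_j(k)+\overline w(x_i(k))h+\underline w(x_i(k))g$, which converge (from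 any $x(0)\in[0,1]^n$) to a point $x^*(g,h)$ independent of $x(0)$. *)

theory Defs
  imports "HOL-Analysis.Analysis"
begin

definition norm_inf :: "real^'n^'n \<Rightarrow> real" where
  "norm_inf W = Max (range (\<lambda>i. \<Sum>j\<in>UNIV. \<bar>W$i$j\<bar>))"

definition norm_one :: "real^'n^'n \<Rightarrow> real" where
  "norm_one W = Max (range (\<lambda>j. \<Sum>i\<in>UNIV. \<bar>W$i$j\<bar>))"

definition spec_radius :: "real^'n^'n \<Rightarrow> real" where
  "spec_radius W = Sup {cmod \<mu> | \<mu>. \<exists>v::complex^'n. v \<noteq> 0 \<and>
      (\<chi> i j. complex_of_real (W$i$j)) *v v = \<mu> *s v}"

definition wbar :: "real \<Rightarrow> real \<Rightarrow> real \<Rightarrow> real \<Rightarrow> real" where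
  "wbar \<beta> \<gamma> h x = \<beta> - \<gamma> * \<bar>x - h\<bar>"

definition wund :: "real \<Rightarrow> real \<Rightarrow> real \<Rightarrow> real \<Rightarrow> real" where
  "wund \<beta> \<gamma> g x = \<beta> - \<gamma> * \<bar>x - g\<bar>"

definition alpha :: "real^'n^'n \<Rightarrow> real \<Rightarrow> real \<Rightarrow> real \<Rightarrow> real \<Rightarrow> 'n \<Rightarrow> real \<Rightarrow> real" where
  "alpha W \<beta> \<gamma> g h i x = 1 - (\<Sum>j\<in>UNIV. W$i$j) - wbar \<beta> \<gamma> h x - wund \<beta> \<gamma> g x"

definition opinion_step ::
  "real^'n^'n \<Rightarrow> real \<Rightarrow> real \<Rightarrow> real^'n \<Rightarrow> real \<Rightarrow> real \<Rightarrow> real^'n \<Rightarrow> real^'n" where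
  "opinion_step W \<beta> \<gamma> s g h x = (\<chi> i.
      alpha W \<beta> \<gamma> g h i (x$i) * s$i + (\<Sum>j\<in>UNIV. W$i$j * x$j)
      + wbar \<beta> \<gamma> h (x$i) * h + wund \<beta> \<gamma> g (x$i) * g)"

definition opinion_traj ::
  "real^'n^'n \<Rightarrow> real \<Rightarrow> real \<Rightarrow> real^'n \<Rightarrow> real \<Rightarrow> real \<Rightarrow> real^'n \<Rightarrow> nat \<Rightarrow> real^'n" where
  "opinion_traj W \<beta> \<gamma> s g h x0 k = ((opinion_step W \<beta> \<gamma> s g h) ^^ k) x0"

end

theory Submission
  imports Defs
begin

lemma row_le_norm_inf:
  fixes W :: "real^'n^'n"
  assumes "\<And>i j. W$i$j \<ge> 0"
  shows "(\<Sum>j\<in>UNIV. W$i$j) \<le> norm_inf W"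
proof -
  have "(\<Sum>j\<in>UNIV. W$i$j) = (\<Sum>j\<in>UNIV. \<bar>W$i$j\<bar>)" using assms by simp
  also have "\<dots> \<le> norm_inf W" unfolding norm_inf_def by (rule Max_ge) auto
  finally show ?thesis .
qed

lemma step_bounds:
  fixes W :: "real^'n^'n"
  assumes W_nonneg: "\<And>i j. W$i$j \<ge> 0"
    and bg: "\<beta> \<ge> \<gamma>" "\<gamma> \<ge> 0"
    and rlt: "1 - (\<Sum>j\<in>UNIV. W$i$j) > 2*\<beta>"
    and xi: "0 \<le> x$i" "x$i \<le> 1" and gh: "0 \<le> g" "g \<le> h" "h \<le> 1"
    and xM: "\<And>j. x$j \<le> M" and xm: "\<And>j. m \<le> x$j"
    and si: "g \<le> s$i" "s$i \<le> h"
  shows "opinion_step W \<beta> \<gamma> s g h x $ i \<le> (1 - (\<Sum>j\<in>UNIV. W$i$j)) * h + (\<Sum>j\<in>UNIV. W$i$j) * M"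
    and "opinion_step W \<beta> \<gamma> s g h x $ i \<ge> (1 - (\<Sum>j\<in>UNIV. W$i$j)) * g + (\<Sum>j\<in>UNIV. W$i$j) * m"
proof -
  define r where "r = (\<Sum>j\<in>UNIV. W$i$j)"
  define a where "a = alpha W \<beta> \<gamma> g h i (x$i)"
  define u where "u = wbar \<beta> \<gamma> h (x$i)"
  define v where "v = wund \<beta> \<gamma> g (x$i)"
  have u0: "u \<ge> 0" and ub: "u \<le> \<beta>"
  proof -
    have "\<bar>x$i - h\<bar> \<le> 1" using xi gh by auto
    hence "\<gamma> * \<bar>x$i - h\<bar> \<le> \<gamma>" using bg by (simp add: mult_left_le)
    thus "u \<ge> 0" using bg unfolding u_def wbar_def by linarith
    show "u \<le> \<beta>" using bg unfolding u_def wbar_def by simp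
  qed
  have v0: "v \<ge> 0" and vb: "v \<le> \<beta>"
  proof -
    have "\<bar>x$i - g\<bar> \<le> 1" using xi gh by auto
    hence "\<gamma> * \<bar>x$i - g\<bar> \<le> \<gamma>" using bg by (simp add: mult_left_le)
    thus "v \<ge> 0" using bg unfolding v_def wund_def by linarith
    show "v \<le> \<beta>" using bg unfolding v_def wund_def by simp
  qed
  have asum: "a = 1 - r - u - v" unfolding a_def alpha_def r_def u_def v_def by simp
  have a0: "a \<ge> 0" using asum ub vb rlt r_def by linarith
  have eq: "opinion_step W \<beta> \<gamma> s g h x $ i = a * s$i + (\<Sum>j\<in>UNIV. W$i$j * x$j) + u * h + v * g"
    unfolding opinion_step_def a_def u_def v_def by simp
  have S1: "(\<Sum>j\<in>UNIV. W$i$j * x$j) \<le> r * M"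
    unfolding r_def sum_distrib_right by (rule sum_mono) (simp add: W_nonneg mult_left_mono xM)
  have S2: "(\<Sum>j\<in>UNIV. W$i$j * x$j) \<ge> r * m"
    unfolding r_def sum_distrib_right by (rule sum_mono) (simp add: W_nonneg mult_left_mono xm)
  have "a * s$i \<le> a * h" using a0 si by (simp add: mult_left_mono)
  moreover have "v * g \<le> v * h" using v0 gh by (simp add: mult_left_mono)
  ultimately show "opinion_step W \<beta> \<gamma> s g h x $ i \<le> (1 - (\<Sum>j\<in>UNIV. W$i$j)) * h + (\<Sum>j\<in>UNIV. W$i$j) * M"
    using eq S1 asum unfolding r_def[symmetric] by (simp add: algebra_simps)
  have "a * s$i \<ge> a * g" using a0 si by (simp add: mult_left_mono)
  moreover have "u * h \<ge> u * g" using u0 gh by (simp add: mult_left_mono)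
  ultimately show "opinion_step W \<beta> \<gamma> s g h x $ i \<ge> (1 - (\<Sum>j\<in>UNIV. W$i$j)) * g + (\<Sum>j\<in>UNIV. W$i$j) * m"
    using eq S2 asum unfolding r_def[symmetric] by (simp add: algebra_simps)
qed

lemma final_alg:
  fixes D X A B S k E1 E2 :: real
  assumes "D * X = k * A - B + (E1 + E2) * S" "D > 0" "S > 0"
  shows "X = (k * (A / S) - B / S + E1 + E2) / D * S"
proof -
  have "X = (k * A - B + (E1 + E2) * S) / D" using assms by (simp add: field_simps)
  also have "\<dots> = (k * (A / S) - B / S + E1 + E2) / D * S" using assms by (simp add: field_simps)
  finally show ?thesis .
qed

theorem corollary1:
  fixes W :: "real^'n^'n" and c s x0 xstar :: "real^'n"
    and \<beta> \<gamma> g h lam :: real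
  assumes W_nonneg: "\<And>i j. W$i$j \<ge> 0"
    and W_diag: "\<And>i. W$i$i = 0"
    and lam: "lam = spec_radius W"
    and c_pos: "\<And>i. c$i > 0"
    and c_eig: "transpose W *v c = lam *\<^sub>R c"
    and beta_gamma: "\<beta> \<ge> \<gamma>" "\<gamma> \<ge> 0"
    and norm_cond: "1 - max (norm_inf W) (norm_one W) > max (2*\<beta>) (4*\<gamma>)"
    and s_range: "\<And>i. 0 \<le> s$i \<and> s$i \<le> 1"
    and g_h: "0 \<le> g" "g \<le> Min (range (\<lambda>i. s$i))"
             "Max (range (\<lambda>i. s$i)) \<le> h" "h \<le> 1"
    and x0_range: "\<And>i. 0 \<le> x0$i \<and> x0$i \<le> 1"
    and conv: "opinion_traj W \<beta> \<gamma> s g h x0 \<longlonglongrightarrow> xstar"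
  shows "c \<bullet> xstar =
     ((1 - 2*\<beta> + (h - g)*\<gamma>) * (\<Sum>i\<in>UNIV. (c$i / (\<Sum>j\<in>UNIV. c$j)) * s$i)
       - (\<Sum>i\<in>UNIV. (c$i / (\<Sum>j\<in>UNIV. c$j)) * s$i * (\<Sum>j\<in>UNIV. W$i$j))
       + (h + g)*\<beta> + (g^2 - h^2)*\<gamma>)
     / (1 - lam + (g - h)*\<gamma>) * (c \<bullet> 1)"
proof -
  define F where "F = opinion_step W \<beta> \<gamma> s g h"
  define T where "T = opinion_traj W \<beta> \<gamma> s g h x0"
  define r where "r i = (\<Sum>j\<in>UNIV. W$i$j)" for i
  have rle: "r i \<le> norm_inf W" for i unfolding r_def by (rule row_le_norm_inf[OF W_nonneg])
  have r0: "r i \<ge> 0" for i unfolding r_def by (simp add: W_nonneg sum_nonneg)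
  have rlt: "1 - r i > 2*\<beta>" for i using rle[of i] norm_cond by linarith
  have sih: "s$i \<le> h" for i using g_h(3) by (meson Max_ge finite UNIV_I finite_imageI image_eqI order_trans)
  have sig: "g \<le> s$i" for i using g_h(2) by (meson Min_le finite UNIV_I finite_imageI image_eqI order_trans)
  have gh: "g \<le> h" using sih sig by (meson order_trans)
  have Tsuc: "T (Suc k) = F (T k)" for k unfolding T_def F_def opinion_traj_def by simp
  have inv: "\<forall>i. 0 \<le> T k $ i \<and> T k $ i \<le> 1" for k
  proof (induction k)
    case 0 thus ?case using x0_range by (simp add: T_def opinion_traj_def)
  next
    case (Suc k)
    show ?case
    proof
      fix i
      have A: "F (T k) $ i \<le> (1 - r i) * h + r i * 1"
        and B: "F (T k) $ i \<ge> (1 - r i) * g + r i * 0"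
        using step_bounds[OF W_nonneg beta_gamma, of i "T k" g h 1 0 s] Suc rlt[of i] g_h(1,4) gh sih sig
        unfolding F_def r_def by auto
      have "(1 - r i) * h + r i * 1 \<le> 1" using rlt[of i] beta_gamma g_h(4) r0[of i]
        by (smt (verit) mult_left_le)
      moreover have "(1 - r i) * g + r i * 0 \<ge> 0" using rlt[of i] beta_gamma g_h(1) by simp
      ultimately show "0 \<le> T (Suc k) $ i \<and> T (Suc k) $ i \<le> 1" using A B Tsuc by auto
    qed
  qed
  have T: "T \<longlonglongrightarrow> xstar" using conv T_def by simp
  have comp: "(\<lambda>k. T k $ i) \<longlonglongrightarrow> xstar $ i" for i using T by (rule tendsto_vec_nth)
  have xs01: "0 \<le> xstar $ i \<and> xstar $ i \<le> 1" for i
  proof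
    show "0 \<le> xstar $ i" by (rule LIMSEQ_le_const[OF comp]) (use inv in auto)
    show "xstar $ i \<le> 1" by (rule LIMSEQ_le_const2[OF comp]) (use inv in auto)
  qed
  have "(\<lambda>k. F (T k)) \<longlonglongrightarrow> F xstar"
    unfolding F_def opinion_step_def alpha_def wbar_def wund_def
    by (intro tendsto_intros comp)
  moreover have "(\<lambda>k. F (T k)) \<longlonglongrightarrow> xstar"
    using T unfolding Tsuc[symmetric] by (rule LIMSEQ_Suc)
  ultimately have fixp: "F xstar = xstar" using LIMSEQ_unique by blast
  define M where "M = Max (range (\<lambda>j. xstar$j))"
  define m where "m = Min (range (\<lambda>j. xstar$j))"
  have xM: "xstar$j \<le> M" for j unfolding M_def by (rule Max_ge) auto
  have xm: "m \<le> xstar$j" for j unfolding m_def by (rule Min_le) auto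
  have "M \<in> range (\<lambda>j. xstar$j)" unfolding M_def by (rule Max_in) auto
  then obtain iM where iM: "xstar$iM = M" by auto
  have "m \<in> range (\<lambda>j. xstar$j)" unfolding m_def by (rule Min_in) auto
  then obtain im where im: "xstar$im = m" by auto
  have Mh: "M \<le> h"
  proof (rule ccontr)
    assume "\<not> M \<le> h"
    have "xstar$iM \<le> (1 - r iM) * h + r iM * M"
      using step_bounds(1)[OF W_nonneg beta_gamma, of iM xstar g h M m s] xs01 rlt g_h(1,4) gh sih sig xM xm fixp
      unfolding F_def r_def by auto
    moreover have "(1 - r iM) * h < (1 - r iM) * M" using \<open>\<not> M \<le> h\<close> rlt[of iM] beta_gamma by simp
    ultimately show False using iM by (simp add: algebra_simps)
  qed
  have mg: "g \<le> m"
  proof (rule ccontr)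
    assume "\<not> g \<le> m"
    have "xstar$im \<ge> (1 - r im) * g + r im * m"
      using step_bounds(2)[OF W_nonneg beta_gamma, of im xstar g h M m s] xs01 rlt g_h(1,4) gh sih sig xM xm fixp
      unfolding F_def r_def by auto
    moreover have "(1 - r im) * m < (1 - r im) * g" using \<open>\<not> g \<le> m\<close> rlt[of im] beta_gamma by simp
    ultimately show False using im by (simp add: algebra_simps)
  qed
  have xh: "xstar$i \<le> h" for i using xM Mh order_trans by blast
  have xg: "g \<le> xstar$i" for i using xm mg order_trans by blast
  have key: "(1 - \<gamma>*(h-g)) * xstar$i = (1 - r i - 2*\<beta> + \<gamma>*(h-g)) * s$i + (\<Sum>j\<in>UNIV. W$i$j * xstar$j)
      + \<beta>*(h+g) + \<gamma>*(g^2-h^2)" for i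
  proof -
    have "xstar$i = F xstar $ i" using fixp by simp
    also have "\<dots> = (1 - r i - (\<beta> - \<gamma>*(h - xstar$i)) - (\<beta> - \<gamma>*(xstar$i - g))) * s$i
        + (\<Sum>j\<in>UNIV. W$i$j * xstar$j) + (\<beta> - \<gamma>*(h - xstar$i))*h + (\<beta> - \<gamma>*(xstar$i - g))*g"
      using xh[of i] xg[of i]
      unfolding F_def opinion_step_def alpha_def wbar_def wund_def r_def by (simp add: abs_if)
    finally show ?thesis by (simp add: algebra_simps power2_eq_square)
  qed
  define S where "S = (\<Sum>j\<in>UNIV. c$j)"
  have S0: "S > 0" unfolding S_def using c_pos by (simp add: sum_pos)
  have colsum: "(\<Sum>i\<in>UNIV. W$i$j * c$i) = lam * c$j" for j
  proof -
    have "(transpose W *v c) $ j = lam * c$j" using c_eig by simp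
    thus ?thesis by (simp add: matrix_vector_mult_def transpose_def mult.commute)
  qed
  have swap: "(\<Sum>i\<in>UNIV. c$i * (\<Sum>j\<in>UNIV. W$i$j * xstar$j)) = lam * (c \<bullet> xstar)"
  proof -
    have "(\<Sum>i\<in>UNIV. c$i * (\<Sum>j\<in>UNIV. W$i$j * xstar$j)) = (\<Sum>i\<in>UNIV. \<Sum>j\<in>UNIV. W$i$j * c$i * xstar$j)"
      by (simp add: sum_distrib_left mult_ac)
    also have "\<dots> = (\<Sum>j\<in>UNIV. \<Sum>i\<in>UNIV. W$i$j * c$i * xstar$j)" by (rule sum.swap)
    also have "\<dots> = (\<Sum>j\<in>UNIV. (\<Sum>i\<in>UNIV. W$i$j * c$i) * xstar$j)"
      by (simp add: sum_distrib_right)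
    also have "\<dots> = lam * (c \<bullet> xstar)" by (simp add: colsum inner_vec_def sum_distrib_left mult.assoc)
    finally show ?thesis .
  qed
  have lamle: "lam \<le> norm_inf W"
  proof -
    have "lam * S = (\<Sum>j\<in>UNIV. \<Sum>i\<in>UNIV. W$i$j * c$i)" unfolding S_def by (simp add: colsum sum_distrib_left)
    also have "\<dots> = (\<Sum>i\<in>UNIV. \<Sum>j\<in>UNIV. W$i$j * c$i)" by (rule sum.swap)
    also have "\<dots> = (\<Sum>i\<in>UNIV. c$i * r i)" unfolding r_def
      by (simp add: sum_distrib_left mult_ac)
    also have "\<dots> \<le> (\<Sum>i\<in>UNIV. c$i * norm_inf W)"
      by (rule sum_mono) (simp add: rle c_pos less_imp_le mult_left_mono)
    also have "\<dots> = norm_inf W * S" unfolding S_def by (simp add: sum_distrib_left mult.commute)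
    finally show ?thesis using S0 by simp
  qed
  define D where "D = 1 - lam + (g - h)*\<gamma>"
  have "\<gamma> * (h - g) \<le> \<gamma>" using beta_gamma gh g_h by (simp add: mult_left_le)
  hence D0: "D > 0" unfolding D_def using lamle norm_cond beta_gamma by (simp add: algebra_simps)
  have sumkey: "(1 - \<gamma>*(h-g)) * (c \<bullet> xstar) = (1 - 2*\<beta> + \<gamma>*(h-g)) * (\<Sum>i\<in>UNIV. c$i * s$i)
      - (\<Sum>i\<in>UNIV. c$i * s$i * r i) + lam * (c \<bullet> xstar) + (\<beta>*(h+g) + \<gamma>*(g^2-h^2)) * S"
  proof -
    have "(1 - \<gamma>*(h-g)) * (c \<bullet> xstar) = (\<Sum>i\<in>UNIV. c$i * ((1 - \<gamma>*(h-g)) * xstar$i))"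
      by (simp add: inner_vec_def sum_distrib_left mult.left_commute)
    also have "\<dots> = (\<Sum>i\<in>UNIV. (1 - 2*\<beta> + \<gamma>*(h-g)) * (c$i * s$i) - c$i * s$i * r i
        + c$i * (\<Sum>j\<in>UNIV. W$i$j * xstar$j) + (\<beta>*(h+g) + \<gamma>*(g^2-h^2)) * c$i)"
      by (intro sum.cong refl, subst key, simp add: algebra_simps)
    also have "\<dots> = (1 - 2*\<beta> + \<gamma>*(h-g)) * (\<Sum>i\<in>UNIV. c$i * s$i)
      - (\<Sum>i\<in>UNIV. c$i * s$i * r i) + lam * (c \<bullet> xstar) + (\<beta>*(h+g) + \<gamma>*(g^2-h^2)) * S"
      unfolding S_def swap[symmetric] by (simp add: sum.distrib sum_subtractf sum_distrib_left)
    finally show ?thesis .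
  qed
  have c1: "c \<bullet> 1 = S" unfolding S_def by (simp add: inner_vec_def)
  have e1: "(\<Sum>i\<in>UNIV. (c$i / S) * s$i) = (\<Sum>i\<in>UNIV. c$i * s$i) / S"
    by (simp add: sum_divide_distrib)
  have e2: "(\<Sum>i\<in>UNIV. (c$i / S) * s$i * r i) = (\<Sum>i\<in>UNIV. c$i * s$i * r i) / S"
    by (simp add: sum_divide_distrib)
  have "D * (c \<bullet> xstar) = (1 - 2*\<beta> + (h - g)*\<gamma>) * (\<Sum>i\<in>UNIV. c$i * s$i)
      - (\<Sum>i\<in>UNIV. c$i * s$i * r i) + ((h + g)*\<beta> + (g^2 - h^2)*\<gamma>) * S"
    using sumkey unfolding D_def by (simp add: algebra_simps)
  thus ?thesis
    using D0 S0 unfolding c1 S_def[symmetric] r_def[symmetric] e1 e2 D_def[symmetric]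
    by (rule final_alg)
qed

end
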